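(* Let $t\ge1$ be a power of two and $0\le k\le t$. Then $\mathrm{val}(\mathcal{F}[t,k])\le \dfrac{k^2\log(2t)}{t}$ (logarithm base 2).
   Context: An interval is a nonempty set $\{a,\ldots,b\}$ of integers; a $[t,k]$-interval system is a set of $k$ pairwise disjoint intervals in $[t]$. $\mathrm{val}(F)=\sum_{I\in F}1/|I|$ and for a distribution $\mathcal{F}$ over interval systems $\mathrm{val}(\mathcal{F})=\mathbb{E}_{F\sim\mathcal{F}}\mathrm{val}(F)$. For an interval $[a,b]$ and integer $c$, $[a,b]+c=[a+c,b+c]$, and $F+c=\{I+c:I\in F\}$. $\mathcal{F}[t,k]$ is the output distribution of the recursive randomized procedure $\mathrm{Sample}(t,k)$ ($0\le k\le t$): if $k=0$ return $\emptyset$; if $k=1$ return $\{[t]\}$; otherwise let $s=\lceil t/2\rceil$, sample $j\in\{0,\ldots,k\}$ with probability $\binom{s}{j}\binom{t-s}{k-j}/\binom{t}{k}$, compute $F_1=\mathrm{Sample}(s,j)$ and $F_2=\mathrm{Sample}(t-s,k-j)$ independently, and return $F_1\cup(F_2+s)$. *)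

theory Defs
  imports "HOL-Probability.Probability"
begin

text \<open>Intervals are nonempty sets {a..b} of integers; we work inside [t] = {1..t},
  so natural numbers suffice. An interval system is a set of intervals,
  a distribution over interval systems is a pmf.\<close>

definition is_interval :: "nat set \<Rightarrow> bool" where
  "is_interval I \<longleftrightarrow> (\<exists>a b. a \<le> b \<and> I = {a..b})"

definition is_interval_system :: "nat \<Rightarrow> nat \<Rightarrow> nat set set \<Rightarrow> bool" where
  "is_interval_system t k F \<longleftrightarrow> finite F \<and> card F = k \<and>
     (\<forall>I\<in>F. is_interval I \<and> I \<subseteq> {1..t}) \<and>
     (\<forall>I\<in>F. \<forall>J\<in>F. I \<noteq> J \<longrightarrow> I \<inter> J = {})"

definition val :: "nat set set \<Rightarrow> real" where
  "val F = (\<Sum>I\<in>F. 1 / real (card I))"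

definition val_dist :: "nat set set pmf \<Rightarrow> real" where
  "val_dist D = measure_pmf.expectation D val"

definition shift_sys :: "nat set set \<Rightarrow> nat \<Rightarrow> nat set set" where
  "shift_sys F c = (\<lambda>I. (\<lambda>x. x + c) ` I) ` F"

definition split_pmf :: "nat \<Rightarrow> nat \<Rightarrow> nat pmf" where
  "split_pmf t k = embed_pmf (\<lambda>j. if j \<le> k then
      real ((((t + 1) div 2) choose j) * ((t - (t + 1) div 2) choose (k - j))) / real (t choose k)
      else 0)"

text \<open>Sample(t,k); the branch for k > t (outside the procedure's domain 0 \<le> k \<le> t)
  is an arbitrary dummy value ensuring termination.\<close>
function sample :: "nat \<Rightarrow> nat \<Rightarrow> nat set set pmf" where
  "sample t k =
     (if k = 0 then return_pmf {}
      else if k = 1 then return_pmf {{1..t}}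
      else if t < k then return_pmf {}
      else do {
        j \<leftarrow> split_pmf t k;
        F1 \<leftarrow> sample ((t + 1) div 2) j;
        F2 \<leftarrow> sample (t - (t + 1) div 2) (k - j);
        return_pmf (F1 \<union> shift_sys F2 ((t + 1) div 2))
      })"
  by auto
termination
  by (relation "Wellfounded.measure fst") auto

end

theory Submission
  imports Defs
begin
lemma ch2:
  fixes a j :: nat assumes "2 \<le> j"
  shows "j*(j-1)*(a choose j) = a*(a-1)*((a-2) choose (j-2))"
proof (cases "a < 2")
  case True then show ?thesis using assms
    by (metis One_nat_def Suc_1 binomial_eq_0 diff_self_eq_0 less_2_cases mult_0_right mult_is_0 order_less_le_trans)
next
  case False
  then obtain a' where a: "a = Suc (Suc a')" by (metis add_2_eq_Suc le_Suc_ex not_less)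
  obtain j' where j: "j = Suc (Suc j')" using assms by (metis add_2_eq_Suc le_Suc_ex)
  have e1: "Suc (Suc a') * (Suc a' choose Suc j') = (Suc (Suc a') choose Suc (Suc j')) * Suc (Suc j')"
    by (rule Suc_times_binomial_eq)
  have e2: "Suc a' * (a' choose j') = (Suc a' choose Suc j') * Suc j'"
    by (rule Suc_times_binomial_eq)
  have "j*(j-1)*(a choose j) = Suc (Suc j') * Suc j' * (Suc (Suc a') choose Suc (Suc j'))"
    by (simp del: binomial_Suc_Suc add: a j)
  also have "\<dots> = Suc (Suc a') * Suc a' * (a' choose j')"
    using e1 e2 by (metis mult.assoc mult.commute)
  also have "\<dots> = a*(a-1)*((a-2) choose (j-2))" by (simp del: binomial_Suc_Suc add: a j)
  finally show ?thesis .
qed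

lemma fmom:
  fixes a b k :: nat assumes "2 \<le> k"
  shows "(\<Sum>j\<le>k. j*(j-1)*((a choose j)*(b choose (k-j)))) = a*(a-1)*((a+b-2) choose (k-2))"
proof -
  obtain k' where k: "k = Suc (Suc k')" using assms by (metis add_2_eq_Suc le_Suc_ex)
  have "(\<Sum>j\<le>k. j*(j-1)*((a choose j)*(b choose (k-j)))) =
        (\<Sum>i\<le>k'. Suc (Suc i)*(Suc i)*((a choose Suc (Suc i))*(b choose (k'-i))))"
    by (simp only: k sum.atMost_Suc_shift) simp
  also have "\<dots> = (\<Sum>i\<le>k'. a*(a-1)*(((a-2) choose i)*(b choose (k'-i))))"
  proof (rule sum.cong[OF refl])
    fix i
    have h: "Suc (Suc i)*(Suc i)*(a choose Suc (Suc i)) = a*(a-1)*((a-2) choose i)"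
      using ch2[of "Suc (Suc i)" a] by (simp del: binomial_Suc_Suc)
    then show "Suc (Suc i)*(Suc i)*((a choose Suc (Suc i))*(b choose (k'-i))) = a*(a-1)*(((a-2) choose i)*(b choose (k'-i)))"
      by (metis mult.assoc)
  qed
  also have "\<dots> = a*(a-1)*((a-2+b) choose k')"
    by (simp add: sum_distrib_left[symmetric] vandermonde)
  also have "\<dots> = a*(a-1)*((a+b-2) choose (k-2))"
    by (cases "a < 2") (auto simp: k less_2_cases_iff)
  finally show ?thesis .
qed

lemma fmom_rev:
  fixes a b k :: nat assumes "2 \<le> k"
  shows "(\<Sum>j\<le>k. (k-j)*(k-j-1)*((a choose j)*(b choose (k-j)))) = b*(b-1)*((a+b-2) choose (k-2))"
proof -
  have "(\<Sum>j\<le>k. (k-j)*(k-j-1)*((a choose j)*(b choose (k-j)))) =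
        (\<Sum>j=0..k. (k-j)*(k-j-1)*((a choose j)*(b choose (k-j))))" by (simp add: atMost_atLeast0)
  also have "\<dots> = (\<Sum>j=0..k. (k-(k+0-j))*(k-(k+0-j)-1)*((a choose (k+0-j))*(b choose (k-(k+0-j)))))"
    by (rule sum.atLeastAtMost_rev)
  also have "\<dots> = (\<Sum>j\<le>k. j*(j-1)*((b choose j)*(a choose (k-j))))"
    by (auto simp: atMost_atLeast0 mult.commute intro!: sum.cong)
  also have "\<dots> = b*(b-1)*((b+a-2) choose (k-2))" by (rule fmom[OF assms])
  finally show ?thesis by (simp add: add.commute)
qed

lemma val_nonneg: "0 \<le> val F"
  unfolding val_def by (rule sum_nonneg) auto

lemma val_shift: "val (shift_sys F c) = val F"
proof -
  have inj: "inj (\<lambda>I::nat set. (\<lambda>x. x + c) ` I)"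
    by (rule injI) (simp add: inj_image_eq_iff inj_def)
  have "val (shift_sys F c) = (\<Sum>I\<in>F. 1 / real (card ((\<lambda>x. x + c) ` I)))"
    unfolding val_def shift_sys_def by (subst sum.reindex) (auto intro: inj_on_subset[OF inj])
  also have "\<dots> = val F" unfolding val_def
    by (intro sum.cong refl) (simp add: card_image)
  finally show ?thesis .
qed

lemma val_union: "val (A \<union> B) \<le> val A + val B"
proof (cases "finite A \<and> finite B")
  case True
  then show ?thesis unfolding val_def
    by (simp add: sum_Un sum_nonneg)
next
  case False
  then have "val (A \<union> B) = 0" unfolding val_def by auto
  then show ?thesis using val_nonneg[of A] val_nonneg[of B] by simp
qed

definition cc :: "nat \<Rightarrow> nat \<Rightarrow> nat \<Rightarrow> nat" where
  "cc t k j = (((t + 1) div 2) choose j) * ((t - (t + 1) div 2) choose (k - j))"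

lemma split_pmf_pmf:
  assumes "k \<le> t"
  shows "pmf (split_pmf t k) j = (if j \<le> k then real (cc t k j) / real (t choose k) else 0)"
proof -
  let ?f = "\<lambda>j. if j \<le> k then real (cc t k j) / real (t choose k) else 0"
  have pos: "0 < real (t choose k)" using assms by simp
  have sumc: "(\<Sum>j\<le>k. cc t k j) = t choose k"
    unfolding cc_def using vandermonde[of "(t + 1) div 2" "t - (t + 1) div 2" k] by simp
  have "(\<integral>\<^sup>+x. ennreal (?f x) \<partial>count_space UNIV) = (\<Sum>x\<in>{..k}. ennreal (?f x))"
    by (rule nn_integral_count_space') auto
  also have "\<dots> = ennreal (\<Sum>x\<in>{..k}. ?f x)" by (rule sum_ennreal) simp
  also have "(\<Sum>x\<in>{..k}. ?f x) = (\<Sum>x\<in>{..k}. real (cc t k x)) / real (t choose k)"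
    by (simp add: sum_divide_distrib)
  also have "\<dots> = 1" using pos sumc by (simp flip: of_nat_sum)
  finally have "(\<integral>\<^sup>+x. ennreal (?f x) \<partial>count_space UNIV) = 1" by simp
  then show ?thesis unfolding split_pmf_def cc_def[symmetric]
    by (subst pmf_embed_pmf) auto
qed


definition g :: "nat \<Rightarrow> nat \<Rightarrow> real" where
  "g m k = (real (k*(k-1)) * m + k) / 2^m"

lemma g_nonneg: "0 \<le> g m k" unfolding g_def by simp

lemma nat_ineq:
  fixes q k m x y cc :: nat
  assumes k: "2 \<le> k" and X: "x = q*(q-1)*y" and C: "k*(k-1)*cc = (2*q)*(2*q-1)*y"
  shows "2*(m*x + m*x + k*cc) \<le> (k*(k-1)*(m+1) + k)*cc"
proof -
  have "k*1 \<le> k*(k-1)" by (rule mult_le_mono2) (use k in linarith)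
  then have "k*cc \<le> k*(k-1)*cc" by (metis mult_le_mono1 mult_1_right)
  then have a: "k*cc \<le> (2*q)*(2*q-1)*y" by (simp only: C)
  have "4*(q*(q-1)) \<le> (2*q)*(2*q-1)"
    by (cases q) (auto simp: algebra_simps)
  then have "m*(4*(q*(q-1))*y) \<le> m*((2*q)*(2*q-1)*y)" by simp
  then have b: "4*m*x \<le> m*((2*q)*(2*q-1)*y)" using X by (simp add: algebra_simps)
  have "2*(m*x + m*x + k*cc) = 4*m*x + k*cc + k*cc" by simp
  also have "\<dots> \<le> m*((2*q)*(2*q-1)*y) + (2*q)*(2*q-1)*y + k*cc" using a b by linarith
  also have "\<dots> = (m+1)*((2*q)*(2*q-1)*y) + k*cc" by (simp only: add_mult_distrib mult_1_left)
  also have "\<dots> = (m+1)*(k*(k-1)*cc) + k*cc" by (simp only: C)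
  also have "\<dots> = (k*(k-1)*(m+1) + k)*cc" by (simp add: algebra_simps)
  finally show ?thesis .
qed

lemma real_ineq:
  fixes m k :: nat
  assumes k: "2 \<le> k" "k \<le> 2^Suc m"
  shows "(\<Sum>j\<le>k. (g m j + g m (k-j)) * (real ((2^m choose j) * (2^m choose (k-j))) / real ((2^Suc m) choose k)))
         \<le> g (Suc m) k"
proof -
  define q :: nat where "q = 2^m"
  define C where "C = (2*q) choose k"
  define c where "c = (\<lambda>j. (q choose j) * (q choose (k-j)))"
  define N where "N = (\<lambda>j. m*(j*(j-1)*c j) + m*((k-j)*(k-j-1)*c j) + k*c j)"
  have spos: "0 < q" unfolding q_def by simp
  have Cpos: "0 < C" unfolding C_def q_def using k by simp
  have t: "2^Suc m = 2*q" unfolding q_def by simp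
  have tm: "(g m j + g m (k-j)) * (real (c j) / real C) = real (N j) / (real q * real C)" if "j \<le> k" for j
  proof -
    have "real j + real (k-j) = real k" using that by simp
    then show ?thesis unfolding g_def N_def q_def using Cpos
      by (simp add: field_simps)
  qed
  have "(\<Sum>j\<le>k. (g m j + g m (k-j)) * (real (c j) / real C)) = (\<Sum>j\<le>k. real (N j) / (real q * real C))"
    by (rule sum.cong[OF refl]) (rule tm, simp)
  also have "\<dots> = real (\<Sum>j\<le>k. N j) / (real q * real C)"
    by (simp add: sum_divide_distrib)
  finally have S: "(\<Sum>j\<le>k. (g m j + g m (k-j)) * (real (c j) / real C)) = real (\<Sum>j\<le>k. N j) / (real q * real C)" .
  define Y where "Y = (q + q - 2) choose (k-2)"
  have X1: "(\<Sum>j\<le>k. j*(j-1)*c j) = q*(q-1)*Y" unfolding c_def Y_def by (rule fmom[OF k(1)])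
  have X2: "(\<Sum>j\<le>k. (k-j)*(k-j-1)*c j) = q*(q-1)*Y" unfolding c_def Y_def using fmom_rev[OF k(1)] by simp
  have X3: "(\<Sum>j\<le>k. c j) = C" unfolding c_def C_def using vandermonde[of q q k] by (simp add: mult_2)
  have SN: "(\<Sum>j\<le>k. N j) = m*(q*(q-1)*Y) + m*(q*(q-1)*Y) + k*C"
    unfolding N_def by (simp only: sum.distrib sum_distrib_left[symmetric] X1 X2 X3)
  have CC: "k*(k-1)*C = (2*q)*(2*q-1)*Y" unfolding C_def Y_def using ch2[OF k(1), of "2*q"]
    by (simp add: mult_2)
  have NI: "2*(\<Sum>j\<le>k. N j) \<le> (k*(k-1)*(m+1) + k)*C"
    unfolding SN by (rule nat_ineq[OF k(1) refl CC])
  have "real (\<Sum>j\<le>k. N j) / (real q * real C) \<le> g (Suc m) k"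
  proof -
    define K where "K = k*(k-1)"
    have NI': "2*(\<Sum>j\<le>k. N j) \<le> (K*(m+1)+k)*C" using NI K_def by simp
    have "real (2*(\<Sum>j\<le>k. N j)) \<le> real ((K*(m+1)+k)*C)" using NI' by (rule of_nat_mono)
    then have "2 * real (\<Sum>j\<le>k. N j) \<le> (real K * (real m + 1) + real k) * real C" by (simp add: algebra_simps)
    then show ?thesis unfolding g_def q_def K_def[symmetric] using Cpos
      by (simp add: field_simps)
  qed
  then show ?thesis using S unfolding c_def C_def q_def t by simp
qed


lemma sample_unfold:
  assumes "2 \<le> k" "k \<le> t"
  shows "sample t k = split_pmf t k \<bind> (\<lambda>j. sample ((t + 1) div 2) j \<bind>
          (\<lambda>F1. sample (t - (t + 1) div 2) (k - j) \<bind> (\<lambda>F2. return_pmf (F1 \<union> shift_sys F2 ((t + 1) div 2)))))"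
  using assms by (subst sample.simps) simp

lemma main:
  "k \<le> 2^m \<Longrightarrow> (\<integral>\<^sup>+F. ennreal (val F) \<partial>sample (2^m) k) \<le> ennreal (g m k)"
proof (induction m arbitrary: k)
  case 0
  then have "k = 0 \<or> k = 1" by auto
  then show ?case
    by (auto simp: g_def val_def)
next
  case (Suc m)
  define t :: nat where "t = 2^Suc m"
  define q :: nat where "q = 2^m"
  have hq: "(t + 1) div 2 = q" "t - (t+1) div 2 = q" unfolding t_def q_def by simp_all
  have hq3: "t - q = q" unfolding t_def q_def by simp
  consider "k = 0" | "k = 1" | "2 \<le> k" by linarith
  then show ?case
  proof cases
    case 1 then show ?thesis by (simp add: g_def val_def)
  next
    case 2 then show ?thesis by (simp add: g_def val_def)
  next
    case 3
    have kt: "k \<le> t" using Suc.prems t_def by simp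
    have tk: "0 < t choose k" using kt by simp
    have supp: "j \<le> k \<and> j \<le> q \<and> k - j \<le> q" if "j \<in> set_pmf (split_pmf t k)" for j
    proof -
      have "pmf (split_pmf t k) j \<noteq> 0" using that by (simp add: set_pmf_eq)
      then have "j \<le> k" "cc t k j \<noteq> 0" using split_pmf_pmf[OF kt, of j] by (auto split: if_splits)
      then show ?thesis using hq unfolding cc_def by (auto simp: hq)
    qed
    have pj: "pmf (split_pmf t k) j = real ((q choose j) * (q choose (k-j))) / real (t choose k)" if "j \<le> k" for j
      using that split_pmf_pmf[OF kt, of j] unfolding cc_def hq(1) hq3 by simp
    have inner: "(\<integral>\<^sup>+F1. \<integral>\<^sup>+F2. ennreal (val (F1 \<union> shift_sys F2 q)) \<partial>sample q (k-j) \<partial>sample q j)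
        \<le> ennreal (g m j + g m (k-j))" if "j \<in> set_pmf (split_pmf t k)" for j
    proof -
      have jq: "j \<le> 2^m" "k - j \<le> 2^m" using supp[OF that] q_def by auto
      have "(\<integral>\<^sup>+F1. \<integral>\<^sup>+F2. ennreal (val (F1 \<union> shift_sys F2 q)) \<partial>sample q (k-j) \<partial>sample q j)
          \<le> (\<integral>\<^sup>+F1. \<integral>\<^sup>+F2. ennreal (val F1) + ennreal (val F2) \<partial>sample q (k-j) \<partial>sample q j)"
        apply (intro nn_integral_mono)
        using val_union[of _ "shift_sys _ q"] val_shift[of _ q] val_nonneg
        by (simp add: ennreal_plus[symmetric] del: ennreal_plus)
      also have "\<dots> = (\<integral>\<^sup>+F1. ennreal (val F1) + (\<integral>\<^sup>+F2. ennreal (val F2) \<partial>sample q (k-j)) \<partial>sample q j)"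
        by (simp add: nn_integral_add measure_pmf.emeasure_space_1)
      also have "\<dots> = (\<integral>\<^sup>+F1. ennreal (val F1) \<partial>sample q j) + (\<integral>\<^sup>+F2. ennreal (val F2) \<partial>sample q (k-j))"
        by (simp add: nn_integral_add measure_pmf.emeasure_space_1)
      also have "\<dots> \<le> ennreal (g m j) + ennreal (g m (k-j))"
        using Suc.IH[OF jq(1)] Suc.IH[OF jq(2)] unfolding q_def by (rule add_mono)
      also have "\<dots> = ennreal (g m j + g m (k-j))" using g_nonneg by (simp add: ennreal_plus)
      finally show ?thesis .
    qed
    have "(\<integral>\<^sup>+F. ennreal (val F) \<partial>sample t k) =
      (\<integral>\<^sup>+j. \<integral>\<^sup>+F1. \<integral>\<^sup>+F2. ennreal (val (F1 \<union> shift_sys F2 q)) \<partial>sample q (k-j) \<partial>sample q j \<partial>split_pmf t k)"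
      unfolding sample_unfold[OF 3 kt] hq(1) hq3 by (simp del: sample.simps)
    also have "\<dots> \<le> (\<integral>\<^sup>+j. ennreal (g m j + g m (k-j)) \<partial>split_pmf t k)"
      by (intro nn_integral_mono_AE AE_pmfI inner)
    also have "\<dots> = (\<Sum>j\<le>k. ennreal (g m j + g m (k-j)) * pmf (split_pmf t k) j)"
      by (rule nn_integral_measure_pmf_support) (auto dest: supp)
    also have "\<dots> = ennreal (\<Sum>j\<le>k. (g m j + g m (k-j)) * pmf (split_pmf t k) j)"
      using g_nonneg by (subst sum_ennreal[symmetric]) (auto simp: ennreal_mult' pmf_nonneg add_nonneg_nonneg)
    also have "\<dots> \<le> ennreal (g (Suc m) k)"
    proof (rule ennreal_leI)
      have "(\<Sum>j\<le>k. (g m j + g m (k-j)) * pmf (split_pmf t k) j) =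
        (\<Sum>j\<le>k. (g m j + g m (k-j)) * (real ((q choose j) * (q choose (k-j))) / real (t choose k)))"
        by (intro sum.cong refl) (simp add: pj)
      also have "\<dots> \<le> g (Suc m) k" using real_ineq[OF 3] Suc.prems unfolding q_def t_def by simp
      finally show "(\<Sum>j\<le>k. (g m j + g m (k-j)) * pmf (split_pmf t k) j) \<le> g (Suc m) k" .
    qed
    finally show ?thesis unfolding t_def .
  qed
qed


theorem mainTheorem13:
  fixes t k m :: nat
  assumes "t = 2 ^ m"
    and "k \<le> t"
  shows "val_dist (sample t k) \<le> real k ^ 2 * log 2 (2 * real t) / real t"
proof -
  have M: "(\<integral>\<^sup>+F. ennreal (val F) \<partial>sample t k) \<le> ennreal (g m k)"
    using main[of k m] assms by simp
  have "val_dist (sample t k) = enn2real (\<integral>\<^sup>+F. ennreal (val F) \<partial>sample t k)"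
    unfolding val_dist_def by (rule integral_eq_nn_integral) (auto simp: val_nonneg)
  also have "\<dots> \<le> enn2real (ennreal (g m k))"
    by (rule enn2real_mono[OF M]) simp
  also have "\<dots> = g m k" using g_nonneg by simp
  also have "\<dots> \<le> real k ^ 2 * log 2 (2 * real t) / real t"
  proof -
    have L: "log 2 (2 * real t) = real m + 1"
    proof -
      have "2 * real t = 2 ^ Suc m" using assms(1) by simp
      moreover have "log 2 ((2::real) ^ Suc m) = real (Suc m) * log 2 2" by (rule log_nat_power) simp
      ultimately show ?thesis by simp
    qed
    have k1: "real (k*(k-1)) \<le> real k ^ 2"
      by (cases k) (auto simp: power2_eq_square algebra_simps)
    have k2: "real k \<le> real k ^ 2" by (cases k) (auto simp: power2_eq_square)
    have "real (k*(k-1)) * real m + real k \<le> real k ^ 2 * real m + real k ^ 2"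
      using k1 k2 by (intro add_mono mult_right_mono) auto
    then have "real (k*(k-1)) * real m + real k \<le> real k ^ 2 * (real m + 1)"
      by (simp add: algebra_simps)
    then have "(real (k*(k-1)) * real m + real k) / real t \<le> real k ^ 2 * (real m + 1) / real t"
      by (rule divide_right_mono) simp
    then show ?thesis unfolding L unfolding g_def assms(1) by simp
  qed
  finally show ?thesis .
qed

end
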